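(* Let $k\geq 2$ be an integer and let $\gamma\geq 0$ be a real number. For finite sets $X$ and functions $f:X\to X$, write $f^k$ for the $k$-fold iterate of $f$. Then, as $n\to\infty$, \[\max_{\substack{f:X\to X\\ |X|=n}}\frac{\deg(f^k)}{\deg(f)^\gamma}\geq \frac{1+o(1)}{(k+1)^\gamma}\,n^{1-1/2^{k-1}}.\] Moreover, if $\gamma\geq 2-1/2^{k-1}$, then for every $n\geq 1$, \[\max_{\substack{f:X\to X\\ |X|=n}}\frac{\deg(f^k)}{\deg(f)^{\gamma}}\leq n^{1-1/2^{k-1}}.\]
   Context: For finite sets $X,Y$ and a function $f:X\to Y$, the degree (of noninjectivity/noninvertibility) of $f$ is $\deg(f)=\frac{1}{|X|}\sum_{x\in X}|f^{-1}(f(x))|=\frac{1}{|X|}\sum_{y\in Y}|f^{-1}(y)|^2$. The maxima range over all $n$-element sets $X$ and all functions $f:X\to X$. *)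

theory Defs
  imports Complex_Main
begin

text \<open>Degree of noninjectivity of a function f : X -> X on a finite set X
  (values of f outside X are irrelevant):
  deg f = (1/|X|) * sum over x in X of |f^{-1}(f x)|, preimages taken inside X.\<close>
definition fdeg :: "'a set \<Rightarrow> ('a \<Rightarrow> 'a) \<Rightarrow> real" where
  "fdeg X f = (\<Sum>x\<in>X. real (card {y\<in>X. f y = f x})) / real (card X)"

end

theory Submission
  imports Defs
begin


definition cnt :: "'a set \<Rightarrow> ('a \<Rightarrow> 'b) \<Rightarrow> 'a \<Rightarrow> nat" where
  "cnt X h x = card {y\<in>X. h y = h x}"
definition PP :: "'a set \<Rightarrow> ('a \<Rightarrow> 'b) \<Rightarrow> nat" where
  "PP X h = (\<Sum>x\<in>X. cnt X h x)"

lemma fdeg_PP: "fdeg X h = real (PP X h) / real (card X)"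
  by (simp add: fdeg_def PP_def cnt_def)

lemma card_ind: "finite X \<Longrightarrow> real (card {y\<in>X. Q y}) = (\<Sum>y\<in>X. if Q y then 1 else 0)"
  by (simp add: sum.If_cases Int_def)

lemma reindex:
  fixes F :: "'a \<Rightarrow> real"
  assumes "finite X" "g ` X \<subseteq> X"
  shows "(\<Sum>x\<in>X. F (g x)) = (\<Sum>w\<in>X. real (card {y\<in>X. g y = w}) * F w)"
proof -
  have "(\<Sum>x\<in>X. F (g x)) = (\<Sum>w\<in>X. \<Sum>x\<in>{x. x\<in>X \<and> g x = w}. F (g x))"
    using sum.group[OF assms(1) assms(1) assms(2), of "\<lambda>x. F (g x)"] by simp
  also have "\<dots> = (\<Sum>w\<in>X. real (card {y\<in>X. g y = w}) * F w)"
    by (intro sum.cong refl) simp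
  finally show ?thesis .
qed

lemma cnt_sq:
  assumes "finite X" "w \<in> X"
  shows "real (cnt X h w) ^ 2 \<le> real (PP X h)"
proof -
  have "real (cnt X h w) ^ 2 = (\<Sum>x\<in>{y\<in>X. h y = h w}. real (cnt X h x))"
  proof -
    have "(\<Sum>x\<in>{y\<in>X. h y = h w}. real (cnt X h x)) = (\<Sum>x\<in>{y\<in>X. h y = h w}. real (cnt X h w))"
      by (intro sum.cong refl) (simp add: cnt_def)
    then show ?thesis by (simp add: power2_eq_square cnt_def)
  qed
  also have "\<dots> \<le> (\<Sum>x\<in>X. real (cnt X h x))"
    by (rule sum_mono2) (use assms in auto)
  finally show ?thesis by (simp add: PP_def)
qed

lemma comp_bound:
  assumes fin: "finite X" and gX: "g ` X \<subseteq> X"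
  shows "real (PP X (h \<circ> g)) \<le> sqrt (real (PP X h)) * real (PP X g)"
proof -
  define m where "m w = real (card {y\<in>X. g y = w})" for w
  define ind where "ind a b = (if (a::'b) = b then 1 else (0::real))" for a b
  have ind_sym: "ind a b = ind b a" for a b by (auto simp: ind_def)
  have ind_nn: "ind a b \<ge> 0" for a b by (auto simp: ind_def)
  have cntr: "real (cnt X \<phi> x) = (\<Sum>y\<in>X. if \<phi> y = \<phi> x then 1 else 0)" for \<phi> :: "'a \<Rightarrow> 'c" and x
    unfolding cnt_def by (rule card_ind[OF fin])
  have "real (PP X (h \<circ> g)) = (\<Sum>x\<in>X. \<Sum>y\<in>X. ind (h (g y)) (h (g x)))"
    by (simp add: PP_def cntr ind_def)
  also have "\<dots> = (\<Sum>x\<in>X. \<Sum>w'\<in>X. m w' * ind (h w') (h (g x)))"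
  proof (rule sum.cong[OF refl])
    fix x assume "x \<in> X" show "(\<Sum>y\<in>X. ind (h (g y)) (h (g x))) = (\<Sum>w'\<in>X. m w' * ind (h w') (h (g x)))"
      using reindex[OF fin gX, of "\<lambda>w. ind (h w) (h (g x))"] unfolding m_def by simp
  qed
  also have "\<dots> = (\<Sum>w\<in>X. m w * (\<Sum>w'\<in>X. m w' * ind (h w') (h w)))"
    unfolding m_def by (rule reindex[OF fin gX, of "\<lambda>w. \<Sum>w'\<in>X. real (card {y \<in> X. g y = w'}) * ind (h w') (h w)"])
  also have "\<dots> = (\<Sum>w\<in>X. \<Sum>w'\<in>X. ind (h w) (h w') * (m w * m w'))"
    by (simp add: sum_distrib_left ind_sym mult_ac)
  also have "\<dots> \<le> (\<Sum>w\<in>X. \<Sum>w'\<in>X. ind (h w) (h w') * ((m w ^ 2 + m w' ^ 2) / 2))"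
  proof (intro sum_mono mult_left_mono ind_nn)
    fix w w' show "m w * m w' \<le> (m w ^ 2 + m w' ^ 2) / 2"
      using sum_squares_ge_zero[of "m w - m w'" 0] by (simp add: power2_eq_square algebra_simps)
  qed
  also have "\<dots> = ((\<Sum>w\<in>X. \<Sum>w'\<in>X. ind (h w) (h w') * m w ^ 2) + (\<Sum>w\<in>X. \<Sum>w'\<in>X. ind (h w) (h w') * m w' ^ 2)) / 2"
    by (simp add: sum_divide_distrib sum.distrib add_divide_distrib distrib_left)
  also have "(\<Sum>w\<in>X. \<Sum>w'\<in>X. ind (h w) (h w') * m w' ^ 2) = (\<Sum>w\<in>X. \<Sum>w'\<in>X. ind (h w) (h w') * m w ^ 2)"
    by (subst sum.swap) (simp add: ind_sym)
  also have "(\<Sum>w\<in>X. \<Sum>w'\<in>X. ind (h w) (h w') * m w ^ 2) = (\<Sum>w\<in>X. m w ^ 2 * real (cnt X h w))"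
    by (simp add: cntr ind_def sum_distrib_left sum_distrib_right mult.commute eq_commute)
  also have "((\<Sum>w\<in>X. m w ^ 2 * real (cnt X h w)) + (\<Sum>w\<in>X. m w ^ 2 * real (cnt X h w))) / 2
      = (\<Sum>w\<in>X. m w ^ 2 * real (cnt X h w))" by simp
  also have "\<dots> \<le> (\<Sum>w\<in>X. m w ^ 2 * sqrt (real (PP X h)))"
  proof (intro sum_mono mult_left_mono)
    fix w assume "w \<in> X"
    then show "real (cnt X h w) \<le> sqrt (real (PP X h))"
      using cnt_sq[OF fin, of w h] real_le_rsqrt by blast
  qed simp
  also have "\<dots> = sqrt (real (PP X h)) * (\<Sum>w\<in>X. m w * m w)"
    by (simp add: sum_distrib_left power2_eq_square mult.commute)
  also have "(\<Sum>w\<in>X. m w * m w) = real (PP X g)"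
  proof -
    have "real (PP X g) = (\<Sum>x\<in>X. m (g x))" by (simp add: PP_def cnt_def m_def)
    also have "\<dots> = (\<Sum>w\<in>X. m w * m w)"
      unfolding m_def by (rule reindex[OF fin gX, of "\<lambda>w. real (card {y\<in>X. g y = w})"])
    finally show ?thesis by simp
  qed
  finally show ?thesis .
qed

lemma PP_ge: assumes "finite X" shows "card X \<le> PP X h"
proof -
  have "card X = (\<Sum>x\<in>X. 1::nat)" by simp
  also have "\<dots> \<le> (\<Sum>x\<in>X. cnt X h x)"
  proof (rule sum_mono)
    fix x assume "x \<in> X"
    then have "{y\<in>X. h y = h x} \<noteq> {}" by auto
    then show "1 \<le> cnt X h x" unfolding cnt_def using assms
      by (simp add: Suc_leI card_gt_0_iff)
  qed
  finally show ?thesis by (simp add: PP_def)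
qed

lemma fdeg_ge1: assumes "finite X" "X \<noteq> {}" shows "fdeg X h \<ge> 1"
proof -
  have "real (card X) > 0" using assms by (simp add: card_gt_0_iff)
  moreover have "real (card X) \<le> real (PP X h)" using PP_ge[OF assms(1)] by simp
  ultimately show ?thesis by (simp add: fdeg_PP)
qed

lemma fdeg_comp:
  assumes fin: "finite X" "X \<noteq> {}" and gX: "g ` X \<subseteq> X"
  shows "fdeg X (h \<circ> g) \<le> sqrt (real (card X) * fdeg X h) * fdeg X g"
proof -
  define n where "n = real (card X)"
  have n: "n > 0" using fin by (simp add: n_def card_gt_0_iff)
  have "fdeg X (h \<circ> g) = real (PP X (h \<circ> g)) / n" by (simp add: fdeg_PP n_def)
  also have "\<dots> \<le> sqrt (real (PP X h)) * real (PP X g) / n"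
    using comp_bound[OF fin(1) gX, of h] n by (simp add: divide_right_mono)
  also have "real (PP X h) = n * fdeg X h" using n by (simp add: fdeg_PP n_def)
  also have "real (PP X g) = n * fdeg X g" using n by (simp add: fdeg_PP n_def)
  finally show ?thesis using n by (simp add: n_def comp_def)
qed

lemma iter_bound:
  assumes fin: "finite X" "X \<noteq> {}" and fX: "f ` X \<subseteq> X"
  shows "fdeg X (f ^^ Suc j) \<le> real (card X) powr (1 - 1 / 2 ^ j) * fdeg X f powr (2 - 1 / 2 ^ j)"
proof (induction j)
  case 0
  have "fdeg X f > 0" using fdeg_ge1[OF fin, of f] by simp
  then show ?case using fin by (simp add: card_gt_0_iff)
next
  case (Suc j)
  define n where "n = real (card X)"
  define d where "d = fdeg X f"
  define a where "a = (1::real) - 1 / 2 ^ j"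
  define b where "b = (2::real) - 1 / 2 ^ j"
  have n: "n > 0" using fin by (simp add: n_def card_gt_0_iff)
  have d: "d \<ge> 1" using fdeg_ge1[OF fin, of f] by (simp add: d_def)
  have IH: "fdeg X (f ^^ Suc j) \<le> n powr a * d powr b" using Suc.IH by (simp only: n_def d_def a_def b_def)
  have "fdeg X (f ^^ Suc (Suc j)) = fdeg X ((f ^^ Suc j) \<circ> f)"
    by (simp only: funpow_Suc_right)
  also have "\<dots> \<le> sqrt (n * fdeg X (f ^^ Suc j)) * d"
    using fdeg_comp[OF fin fX, of "f ^^ Suc j"] by (simp add: n_def d_def)
  also have "\<dots> \<le> sqrt (n * (n powr a * d powr b)) * d"
    using IH n d by (intro mult_right_mono real_sqrt_le_mono mult_left_mono) auto
  also have "sqrt (n * (n powr a * d powr b)) = (n powr (1 + a) * d powr b) powr (1/2)"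
    using n d by (simp add: powr_half_sqrt powr_add)
  also have "\<dots> = n powr ((1 + a) / 2) * d powr (b / 2)"
    using n d by (simp add: powr_mult powr_powr)
  also have "n powr ((1 + a) / 2) * d powr (b / 2) * d = n powr ((1 + a) / 2) * d powr (b / 2 + 1)"
    using d by (simp add: powr_add)
  also have "(1 + a) / 2 = 1 - 1 / 2 ^ Suc j" by (simp add: a_def field_simps)
  also have "b / 2 + 1 = 2 - 1 / 2 ^ Suc j" by (simp add: b_def field_simps)
  finally show ?case by (simp only: n_def d_def)
qed

lemma part2:
  fixes k :: nat and \<gamma> :: real
  assumes "k \<ge> 2" "\<gamma> \<ge> 2 - 1 / 2 ^ (k - 1)"
    and fin: "finite X" "X \<noteq> {}" and fX: "f ` X \<subseteq> X"
  shows "fdeg X (f ^^ k) / fdeg X f powr \<gamma> \<le> real (card X) powr (1 - 1 / 2 ^ (k - 1))"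
proof -
  define n where "n = real (card X)"
  define d where "d = fdeg X f"
  have d: "d \<ge> 1" using fdeg_ge1[OF fin, of f] by (simp add: d_def)
  have k: "k = Suc (k - 1)" using assms(1) by simp
  have "fdeg X (f ^^ k) \<le> n powr (1 - 1 / 2 ^ (k - 1)) * d powr (2 - 1 / 2 ^ (k - 1))"
    using iter_bound[OF fin fX, of "k - 1"] k by (simp add: n_def d_def)
  also have "\<dots> \<le> n powr (1 - 1 / 2 ^ (k - 1)) * d powr \<gamma>"
    using d assms(2) by (intro mult_left_mono powr_mono) auto
  finally have "fdeg X (f ^^ k) \<le> n powr (1 - 1 / 2 ^ (k - 1)) * d powr \<gamma>" .
  moreover have "d powr \<gamma> > 0" using d by simp
  ultimately show ?thesis by (simp add: divide_le_eq n_def d_def)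
qed



lemma agree_iter:
  assumes "\<forall>x<B. f x < (B::nat)" "\<forall>x<B. g x = f x" "x < B"
  shows "(g^^m) x = (f^^m) x \<and> (f^^m) x < B"
  by (induction m) (use assms in auto)

lemma div_block:
  fixes c q B y :: nat
  assumes "c \<ge> 1"
  shows "(B \<le> y \<and> (y - B) div c = q) \<longleftrightarrow> (B + q * c \<le> y \<and> y < B + q * c + c)"
proof
  assume h: "B \<le> y \<and> (y - B) div c = q"
  have "q * c + (y - B) mod c = y - B" using h div_mult_mod_eq[of "y - B" c] by simp
  moreover have "(y - B) mod c < c" using assms by simp
  ultimately show "B + q * c \<le> y \<and> y < B + q * c + c" using h by linarith
next
  assume h: "B + q * c \<le> y \<and> y < B + q * c + c"
  then have "(y - B) div c = q" by (intro div_nat_eqI) (auto simp: algebra_simps)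
  then show "B \<le> y \<and> (y - B) div c = q" using h by simp
qed

lemma tree:
  fixes N b :: "nat \<Rightarrow> nat" and k Q :: nat
  assumes N0: "N 0 = 1" and NS: "\<forall>i<k. N (Suc i) = N i * b i" and b1: "\<forall>i<k. b i \<ge> 1"
    and Qb: "\<forall>i. 1 \<le> i \<and> i < k \<longrightarrow> N i * (b i)^2 \<le> Q"
  shows "1 \<le> j \<Longrightarrow> j \<le> k \<Longrightarrow> \<exists>(f::nat\<Rightarrow>nat) A B. 0 < A \<and> (\<forall>x<B. f x < A) \<and> f 0 = 0 \<and> A + N j = B
     \<and> B \<le> 1 + j * N j \<and> (\<forall>x<B. (f^^j) x = 0) \<and> PP {..<B} f \<le> (1 + b 0)^2 + (j - 1) * Q"
proof (induction j)
  case 0 then show ?case by simp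
next
  case (Suc j)
  show ?case
  proof (cases "j = 0")
    case True
    have N1: "N 1 = b 0" using NS N0 Suc.prems by auto
    let ?f = "\<lambda>_::nat. 0::nat"
    have "PP {..<1 + b 0} ?f = (1 + b 0)^2" by (simp add: PP_def cnt_def power2_eq_square)
    then show ?thesis using True N1
      by (intro exI[of _ ?f] exI[of _ 1] exI[of _ "1 + b 0"]) auto
  next
    case False
    then have j1: "1 \<le> j" by simp
    have jk: "j < k" using Suc.prems by simp
    from Suc.IH[OF j1] jk obtain f A B where
      A0: "0 < A" and fA: "\<forall>x<B. f x < A" and f0: "f 0 = 0" and AB: "A + N j = B" and Bb: "B \<le> 1 + j * N j"
      and it: "\<forall>x<B. (f^^j) x = 0" and PPb: "PP {..<B} f \<le> (1 + b 0)^2 + (j - 1) * Q" by auto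
    define c where "c = b j"
    have c1: "c \<ge> 1" using b1 jk by (simp add: c_def)
    have NSj: "N (Suc j) = N j * c" using NS jk by (simp add: c_def)
    have Qj: "N j * c * c \<le> Q" using Qb j1 jk by (simp add: c_def power2_eq_square mult.assoc)
    define B' where "B' = B + N j * c"
    define f' where "f' y = (if y < B then f y else A + (y - B) div c)" for y
    have fB: "\<forall>x<B. f x < B" using fA AB by fastforce
    have newlt: "A + (y - B) div c < B" if "B \<le> y" "y < B'" for y
    proof -
      have "y - B < N j * c" using that by (simp add: B'_def)
      then have "(y - B) div c < N j" by (intro less_mult_imp_div_less)
      then show ?thesis using AB by simp
    qed
    have f'lt: "\<forall>x<B'. f' x < B"
      using fB newlt by (auto simp: f'_def)
    have fne: "\<And>y t. y < B \<Longrightarrow> f y \<noteq> A + t" using fA by fastforce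
    have agree: "\<forall>x<B. f' x = f x" by (simp add: f'_def)
    have iter0: "\<forall>x<B'. (f'^^Suc j) x = 0"
    proof (intro allI impI)
      fix x assume "x < B'"
      then have "f' x < B" using f'lt by blast
      have "(f'^^Suc j) x = (f'^^j) (f' x)" by (simp only: funpow_Suc_right o_apply)
      also have "\<dots> = (f^^j) (f' x)" using agree_iter[OF fB agree \<open>f' x < B\<close>] by blast
      also have "\<dots> = 0" using it \<open>f' x < B\<close> by blast
      finally show "(f'^^Suc j) x = 0" .
    qed
    have old: "cnt {..<B'} f' x = cnt {..<B} f x" if "x < B" for x
    proof -
      have "{y\<in>{..<B'}. f' y = f' x} = {y\<in>{..<B}. f y = f x}"
        using that fA by (auto simp: f'_def B'_def)
      then show ?thesis by (simp add: cnt_def)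
    qed
    have new: "cnt {..<B'} f' x = c" if "B \<le> x" "x < B'" for x
    proof -
      define q where "q = (x - B) div c"
      have "q < N j" using newlt[OF that] AB by (simp add: q_def)
      then have "q * c + c \<le> N j * c" by (metis Suc_leI mult_Suc mult_le_mono1 add.commute)
      have "{y\<in>{..<B'}. f' y = f' x} = {y. B \<le> y \<and> y < B' \<and> (y - B) div c = q}"
        using that fA by (auto simp: f'_def q_def) (metis fne linorder_not_less)
      also have "\<dots> = {B + q * c ..< B + q * c + c}"
      proof (rule set_eqI)
        fix y
        have iff: "(B \<le> y \<and> (y - B) div c = q) = (B + q * c \<le> y \<and> y < B + q * c + c)"
          by (rule div_block[OF c1])
        show "y \<in> {y. B \<le> y \<and> y < B' \<and> (y - B) div c = q} \<longleftrightarrow> y \<in> {B + q * c ..< B + q * c + c}"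
        proof
          assume "y \<in> {y. B \<le> y \<and> y < B' \<and> (y - B) div c = q}"
          then show "y \<in> {B + q * c ..< B + q * c + c}" using iff by auto
        next
          assume a: "y \<in> {B + q * c ..< B + q * c + c}"
          then have "B \<le> y \<and> (y - B) div c = q" using iff by auto
          moreover have "y < B'" using a \<open>q * c + c \<le> N j * c\<close> by (simp add: B'_def)
          ultimately show "y \<in> {y. B \<le> y \<and> y < B' \<and> (y - B) div c = q}" by auto
        qed
      qed
      finally show ?thesis by (simp add: cnt_def)
    qed
    have BB': "B \<le> B'" by (simp add: B'_def)
    have split: "{..<B'} = {..<B} \<union> {B..<B'}" using BB' by auto
    have "PP {..<B'} f' = (\<Sum>x\<in>{..<B}. cnt {..<B'} f' x) + (\<Sum>x\<in>{B..<B'}. cnt {..<B'} f' x)"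
      unfolding PP_def split by (rule sum.union_disjoint) auto
    also have "(\<Sum>x\<in>{..<B}. cnt {..<B'} f' x) = PP {..<B} f"
      unfolding PP_def by (rule sum.cong) (auto simp: old)
    also have "(\<Sum>x\<in>{B..<B'}. cnt {..<B'} f' x) = (\<Sum>x\<in>{B..<B'}. c)"
      by (rule sum.cong) (auto simp: new)
    also have "\<dots> = N j * c * c" by (simp add: B'_def)
    finally have PP': "PP {..<B'} f' \<le> (1 + b 0)^2 + (Suc j - 1) * Q"
      using PPb Qj j1 by (cases j) auto
    have "N j \<le> N (Suc j)" using NSj c1 by simp
    then have "j * N j \<le> j * N (Suc j)" by (rule mult_le_mono2)
    moreover have eqB': "B + N (Suc j) = B'" using NSj by (simp add: B'_def)
    ultimately have "B' \<le> 1 + Suc j * N (Suc j)"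
      using Bb by (simp only: mult_Suc)
    moreover note eqB'
    moreover have "f' 0 = 0" using f0 A0 AB by (simp add: f'_def)
    moreover have "0 < B" using A0 AB by simp
    ultimately show ?thesis using f'lt iter0 PP'
      by (intro exI[of _ f'] exI[of _ B] exI[of _ B']) auto
  qed
qed

lemma fill:
  fixes f :: "nat \<Rightarrow> nat"
  assumes fB: "\<forall>x<B. f x < B" and it: "\<forall>x<B. (f^^k) x = 0" and Bn: "B \<le> n"
  defines "F \<equiv> \<lambda>y. if y < B then f y else y"
  shows "F ` {..<n} \<subseteq> {..<n}" "PP {..<n} F = PP {..<B} f + (n - B)" "B^2 \<le> PP {..<n} (F^^k)"
proof -
  show "F ` {..<n} \<subseteq> {..<n}" using fB Bn by (auto simp: F_def)
  have old: "cnt {..<n} F x = cnt {..<B} f x" if "x < B" for x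
  proof -
    have "{y\<in>{..<n}. F y = F x} = {y\<in>{..<B}. f y = f x}"
      using that fB Bn by (auto simp: F_def)
    then show ?thesis by (simp add: cnt_def)
  qed
  have new: "cnt {..<n} F x = 1" if "B \<le> x" "x < n" for x
  proof -
    have "{y\<in>{..<n}. F y = F x} = {x}"
      using that fB by (auto simp: F_def)
    then show ?thesis by (simp add: cnt_def)
  qed
  have split: "{..<n} = {..<B} \<union> {B..<n}" using Bn by auto
  have "PP {..<n} F = (\<Sum>x\<in>{..<B}. cnt {..<n} F x) + (\<Sum>x\<in>{B..<n}. cnt {..<n} F x)"
    unfolding PP_def split by (rule sum.union_disjoint) auto
  also have "(\<Sum>x\<in>{..<B}. cnt {..<n} F x) = PP {..<B} f"
    unfolding PP_def by (rule sum.cong) (auto simp: old)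
  also have "(\<Sum>x\<in>{B..<n}. cnt {..<n} F x) = (\<Sum>x\<in>{B..<n}. 1)"
    by (rule sum.cong) (auto simp: new)
  finally show "PP {..<n} F = PP {..<B} f + (n - B)" by simp
  have agree: "\<forall>x<B. F x = f x" by (simp add: F_def)
  have G0: "(F^^k) x = 0" if "x < B" for x
    using agree_iter[OF fB agree that, of k] it that by simp
  have "B^2 = (\<Sum>x\<in>{..<B}. B)" by (simp add: power2_eq_square)
  also have "\<dots> \<le> (\<Sum>x\<in>{..<B}. cnt {..<n} (F^^k) x)"
  proof (rule sum_mono)
    fix x assume "x \<in> {..<B}"
    then have "{..<B} \<subseteq> {y\<in>{..<n}. (F^^k) y = (F^^k) x}" using G0 Bn by auto
    then have "card {..<B} \<le> card {y\<in>{..<n}. (F^^k) y = (F^^k) x}" by (intro card_mono) auto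
    then show "B \<le> cnt {..<n} (F^^k) x" by (simp add: cnt_def)
  qed
  also have "\<dots> \<le> PP {..<n} (F^^k)" unfolding PP_def using Bn
    by (intro sum_mono2) auto
  finally show "B^2 \<le> PP {..<n} (F^^k)" .
qed



lemma construct_nat:
  fixes k m n :: nat
  assumes k2: "k \<ge> 2" and mk: "m \<ge> k + 1" and mn: "m ^ (2^k) \<le> n"
  shows "\<exists>F :: nat \<Rightarrow> nat. F ` {..<n} \<subseteq> {..<n} \<and> PP {..<n} F \<le> (1 + m ^ (2^(k-1)))^2 + k * n
            \<and> (m ^ (2^k - 1))^2 \<le> PP {..<n} (F^^k)"
proof -
  define p where "p = (2::nat)^k"
  define b where "b i = m ^ (2^(k - 1 - i))" for i
  define N where "N i = m ^ (p - 2^(k - i))" for i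
  have m1: "m \<ge> 1" using mk by simp
  have N0: "N 0 = 1" by (simp add: N_def p_def)
  have expo: "(2::nat)^(k - i) = 2 * 2^(k - Suc i) \<and> (2::nat)^(k - i) \<le> p \<and> k - 1 - i = k - Suc i" if "i < k" for i
  proof -
    have "k - i = Suc (k - Suc i)" using that by simp
    then have "(2::nat)^(k - i) = 2 * 2^(k - Suc i)" by simp
    moreover have "(2::nat)^(k - i) \<le> p" unfolding p_def by (rule power_increasing) auto
    ultimately show ?thesis by simp
  qed
  have NS: "\<forall>i<k. N (Suc i) = N i * b i"
  proof (intro allI impI)
    fix i assume i: "i < k"
    define t where "t = k - Suc i"
    have e: "(2::nat)^(k - i) = 2 * 2^t" "(2::nat)^(k - i) \<le> p" "k - 1 - i = t" using expo[OF i] by (auto simp: t_def)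
    have eq: "p - 2^t = (p - 2^(k - i)) + 2^t" using e(1) e(2) by arith
    have "N (Suc i) = m ^ (p - 2^t)" by (simp add: N_def t_def)
    also have "\<dots> = m ^ ((p - 2^(k - i)) + 2^t)" by (simp only: eq)
    also have "\<dots> = N i * b i" by (simp only: power_add N_def b_def e(3))
    finally show "N (Suc i) = N i * b i" .
  qed
  have b1: "\<forall>i<k. b i \<ge> 1" using m1 by (simp add: b_def)
  have Nb2: "N i * (b i)^2 = m ^ p" if "i < k" for i
  proof -
    define t where "t = k - Suc i"
    have e: "(2::nat)^(k - i) = 2 * 2^t" "(2::nat)^(k - i) \<le> p" "k - 1 - i = t" using expo[OF that] by (auto simp: t_def)
    have eq: "p = (p - 2^(k - i)) + 2^t * 2" using e(1) e(2) by arith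
    have "N i * (b i)^2 = m ^ (p - 2^(k - i)) * (m ^ (2^t))^2" by (simp only: N_def b_def e(3))
    also have "\<dots> = m ^ (p - 2^(k - i)) * m ^ (2^t * 2)" by (simp only: power_mult)
    also have "\<dots> = m ^ ((p - 2^(k - i)) + 2^t * 2)" by (simp only: power_add)
    also have "\<dots> = m ^ p" by (simp only: eq[symmetric])
    finally show ?thesis .
  qed
  have Qb: "\<forall>i. 1 \<le> i \<and> i < k \<longrightarrow> N i * (b i)^2 \<le> n"
    using Nb2 mn by (simp add: p_def)
  obtain f A B where "0 < A" and fA: "\<forall>x<B. f x < A" and f0: "f 0 = 0" and AB: "A + N k = B"
    and Bb: "B \<le> 1 + k * N k" and it: "\<forall>x<B. (f^^k) x = 0"
    and PPb: "PP {..<B} f \<le> (1 + b 0)^2 + (k - 1) * n"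
    using tree[OF N0 NS b1 Qb, of k] k2 by auto
  have Nk: "N k = m ^ (p - 1)" by (simp add: N_def)
  have p1: "p = Suc (p - 1)" by (simp add: p_def)
  have "m ^ p = m * m ^ (p - 1)" by (subst p1) simp
  also have "\<dots> \<ge> (k + 1) * m ^ (p - 1)" using mk by (rule mult_le_mono1)
  finally have mp: "(k + 1) * m ^ (p - 1) \<le> m ^ p" .
  have "1 \<le> m ^ (p - 1)" using m1 by simp
  then have "B \<le> m ^ p" using Bb mp Nk by simp
  then have Bn: "B \<le> n" using mn by (simp add: p_def)
  have fB: "\<forall>x<B. f x < B" using fA AB by fastforce
  define F where "F = (\<lambda>y. if y < B then f y else y)"
  note fl = fill[OF fB it Bn, folded F_def]
  have "PP {..<n} F \<le> (1 + b 0)^2 + (k - 1) * n + n" using fl(2) PPb by simp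
  also have "\<dots> = (1 + b 0)^2 + k * n" using k2 by (cases k) auto
  finally have PPF: "PP {..<n} F \<le> (1 + m ^ (2^(k-1)))^2 + k * n" by (simp add: b_def)
  have "(m ^ (2^k - 1))^2 \<le> B^2" using AB Nk by (simp add: p_def power_mono)
  then have "(m ^ (2^k - 1))^2 \<le> PP {..<n} (F^^k)" using fl(3) by linarith
  then show ?thesis using fl(1) PPF by blast
qed



lemma construct_real:
  fixes k m n :: nat and \<gamma> :: real
  assumes k2: "k \<ge> 2" and g0: "\<gamma> \<ge> 0" and n1: "n \<ge> 1" and mk: "m \<ge> k + 1" and mn: "m ^ (2^k) \<le> n"
  shows "\<exists>(X :: nat set) f. finite X \<and> card X = n \<and> f ` X \<subseteq> X \<and>
     (real m ^ (2 * 2^k - 2) / real n) / (real (k + 1) + 3 * real n powr (- (1/2))) powr \<gamma>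
       \<le> fdeg X (f ^^ k) / fdeg X f powr \<gamma>"
proof -
  obtain F :: "nat \<Rightarrow> nat" where FX: "F ` {..<n} \<subseteq> {..<n}"
    and PF: "PP {..<n} F \<le> (1 + m ^ (2^(k-1)))^2 + k * n"
    and PK: "(m ^ (2^k - 1))^2 \<le> PP {..<n} (F^^k)"
    using construct_nat[OF k2 mk mn] by blast
  define b0 where "b0 = m ^ (2^(k-1))"
  define s where "s = sqrt (real n)"
  have s1: "s \<ge> 1" using n1 by (simp add: s_def)
  have ns: "real n = s^2" by (simp add: s_def)
  have "b0 ^ 2 = m ^ (2^k)"
  proof -
    have "(2::nat)^k = 2^(k-1) * 2" using k2 by (metis Suc_diff_1 less_le_trans pos2 power_Suc mult.commute zero_less_two le_less_trans less_numeral_extra(1) less_2_cases_iff)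
    then show ?thesis by (simp add: b0_def power_mult)
  qed
  then have "real b0 ^ 2 \<le> s ^ 2" using mn ns by (metis of_nat_le_iff of_nat_power)
  then have b0s: "real b0 \<le> s" using s1 by (meson power2_le_imp_le order_trans zero_le_one)
  have npos: "real n > 0" using n1 by simp
  define d where "d = fdeg {..<n} F"
  define D where "D = fdeg {..<n} (F^^k)"
  define dB where "dB = real (k + 1) + 3 * real n powr (- (1/2))"
  have "(0::nat) \<in> {..<n}" using n1 by simp
  then have ne: "{..<n} \<noteq> {}" by blast
  have d1: "d \<ge> 1" unfolding d_def using ne by (intro fdeg_ge1) auto
  have "d = real (PP {..<n} F) / real n" by (simp add: d_def fdeg_PP)
  also have "\<dots> \<le> ((1 + real b0)^2 + real k * real n) / real n"
  proof (rule divide_right_mono)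
    have "real (PP {..<n} F) \<le> real ((1 + b0)^2 + k * n)" using PF by (simp only: of_nat_le_iff b0_def)
    also have "\<dots> = (1 + real b0)^2 + real k * real n" by simp
    finally show "real (PP {..<n} F) \<le> (1 + real b0)^2 + real k * real n" .
  qed simp
  also have "\<dots> \<le> ((1 + s)^2 + real k * s^2) / s^2"
  proof -
    have "(1 + real b0)^2 \<le> (1 + s)^2" using b0s by (intro power_mono) auto
    then show ?thesis unfolding ns by (intro divide_right_mono) auto
  qed
  also have "\<dots> \<le> dB"
  proof -
    have "real n powr (- (1/2)) = 1 / s" by (simp add: powr_minus_divide powr_half_sqrt s_def)
    then have dBs: "dB = real k + 1 + 3 / s" by (simp add: dB_def)
    have "(1 + s)^2 + real k * s^2 \<le> (real k + 1 + 3 / s) * s^2"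
    proof -
      have "(real k + 1 + 3 / s) * s^2 = real k * s^2 + s^2 + 3 * s" using s1 by (simp add: field_simps power2_eq_square)
      then show ?thesis using s1 by (simp add: power2_eq_square algebra_simps)
    qed
    then show ?thesis using s1 dBs by (simp add: divide_le_eq)
  qed
  finally have ddB: "d \<le> dB" .
  have "real m ^ (2 * 2^k - 2) / real n = real ((m ^ (2^k - 1))^2) / real n"
  proof -
    have ex: "(2::nat) * 2^k - 2 = (2^k - 1) * 2" by (simp add: diff_mult_distrib)
    show ?thesis by (simp add: ex power_mult)
  qed
  also have "\<dots> \<le> real (PP {..<n} (F^^k)) / real n"
    using PK by (intro divide_right_mono) (simp_all only: of_nat_le_iff of_nat_0_le_iff)
  also have "\<dots> = D" by (simp add: D_def fdeg_PP)
  finally have DL: "real m ^ (2 * 2^k - 2) / real n \<le> D" .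
  have "d powr \<gamma> \<le> dB powr \<gamma>" using d1 ddB g0 by (intro powr_mono2) auto
  moreover have "d powr \<gamma> > 0" using d1 by simp
  moreover have "D \<ge> 0" using DL npos by (meson order_trans zero_le_divide_iff zero_le_power of_nat_0_le_iff)
  ultimately have "(real m ^ (2 * 2^k - 2) / real n) / dB powr \<gamma> \<le> D / d powr \<gamma>"
    using DL by (meson frac_le order_trans zero_le_divide_iff zero_le_power of_nat_0_le_iff)
  then show ?thesis using FX by (intro exI[of _ "{..<n}"] exI[of _ F]) (simp add: d_def D_def dB_def)
qed

lemma exp_identity:
  fixes k n :: nat
  assumes k2: "k \<ge> 2" and n1: "n \<ge> 1"
  shows "real n powr (1 - 1 / 2 ^ (k - 1)) = (real n powr (1 / real ((2::nat)^k))) ^ (2 * 2^k - 2) / real n"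
proof -
  define p :: nat where "p = 2^k"
  have npos: "real n > 0" using n1 by simp
  have p2: "real p = 2 * 2 ^ (k - 1)"
  proof -
    have "k = Suc (k - 1)" using k2 by simp
    then have "(2::nat)^k = 2 * 2^(k-1)" by (metis power_Suc)
    then show ?thesis by (simp add: p_def)
  qed
  have pge: "p \<ge> 1" by (simp add: p_def)
  have "(real n powr (1 / real p)) ^ (2 * p - 2) = (real n powr (1 / real p)) powr real (2 * p - 2)"
    using npos by (simp add: powr_realpow)
  also have "\<dots> = real n powr (1 / real p * real (2 * p - 2))" by (simp add: powr_powr)
  also have "1 / real p * real (2 * p - 2) = 2 - 1 / 2 ^ (k - 1)"
  proof -
    have "real (2 * p - 2) = 2 * real p - 2" using pge by (simp add: of_nat_diff)
    then show ?thesis using p2 by (simp add: field_simps)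
  qed
  finally have "(real n powr (1 / real p)) ^ (2 * p - 2) / real n = real n powr (2 - 1 / 2 ^ (k - 1)) / real n powr 1"
    using npos by simp
  also have "\<dots> = real n powr (1 - 1 / 2 ^ (k - 1))"
  proof -
    have "real n powr (2 - 1 / 2 ^ (k - 1)) = real n powr ((1 - 1 / 2 ^ (k - 1)) + 1)" by simp
    also have "\<dots> = real n powr (1 - 1 / 2 ^ (k - 1)) * real n powr 1" by (rule powr_add)
    finally show ?thesis using npos by simp
  qed
  finally show ?thesis by (simp add: p_def)
qed

lemma part1:
  fixes k :: nat and \<gamma> :: real
  assumes k2: "k \<ge> 2" and g0: "\<gamma> \<ge> 0"
  shows "\<exists>e :: nat \<Rightarrow> real. e \<longlonglongrightarrow> 0 \<and>
           (\<forall>n\<ge>1. \<exists>(X :: nat set) f. finite X \<and> card X = n \<and> f ` X \<subseteq> X \<and>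
              fdeg X (f ^^ k) / fdeg X f powr \<gamma>
                \<ge> (1 + e n) / real (k + 1) powr \<gamma> * real n powr (1 - 1 / 2 ^ (k - 1)))"
proof -
  define p :: nat where "p = 2^k"
  define xx where "xx n = real n powr (1 / real p)" for n :: nat
  define mm where "mm n = nat \<lfloor>xx n\<rfloor>" for n
  define dB where "dB n = real (k + 1) + 3 * real n powr (- (1/2))" for n :: nat
  define u where "u n = (real (mm n) / xx n) ^ (2 * p - 2) * (real (k + 1) / dB n) powr \<gamma>" for n
  define e where "e n = (if k + 1 \<le> mm n then min 1 (u n) - 1 else -1)" for n
  have ppos: "real p > 0" by (simp add: p_def)
  have xpos: "xx n > 0" if "n \<ge> 1" for n using that by (simp add: xx_def)
  have mle: "real (mm n) \<le> xx n" if "n \<ge> 1" for n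
    using xpos[OF that] by (simp add: mm_def)
  have mgt: "real (mm n) > xx n - 1" if "n \<ge> 1" for n
    using xpos[OF that] by (simp add: mm_def)
  have ix: "(\<lambda>n. 1 / xx n) \<longlonglongrightarrow> 0"
  proof -
    have "(\<lambda>n. real n powr (- (1 / real p))) \<longlonglongrightarrow> 0"
      by (rule tendsto_neg_powr[OF _ filterlim_real_sequentially]) (use ppos in simp)
    moreover have "real n powr (- (1 / real p)) = 1 / xx n" for n by (simp add: xx_def powr_minus_divide)
    ultimately show ?thesis by simp
  qed
  have ev1: "eventually (\<lambda>n. n \<ge> (1::nat)) sequentially" by (rule eventually_ge_at_top)
  have evs: "eventually (\<lambda>n. 1 / xx n < 1 / real (k + 2)) sequentially"
    by (rule order_tendstoD(2)[OF ix]) simp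
  have evgood: "eventually (\<lambda>n. k + 1 \<le> mm n) sequentially"
    using ev1 evs
  proof eventually_elim
    case (elim n)
    have "xx n > real (k + 2)" using elim xpos[OF elim(1)]
      by (simp add: field_simps)
    then have "real (mm n) > real (k + 1)" using mgt[OF elim(1)] by simp
    then show ?case by simp
  qed
  have lim1: "(\<lambda>n. real (mm n) / xx n) \<longlonglongrightarrow> 1"
  proof (rule tendsto_sandwich[of "\<lambda>n. 1 - 1 / xx n" _ _ "\<lambda>n. 1"])
    show "eventually (\<lambda>n. 1 - 1 / xx n \<le> real (mm n) / xx n) sequentially"
      using ev1
    proof eventually_elim
      case (elim n)
      have "xx n - 1 \<le> real (mm n)" using mgt[OF elim] by simp
      have x: "xx n > 0" using xpos[OF elim] .
      have "1 - 1 / xx n = (xx n - 1) / xx n" using x by (simp add: diff_divide_distrib)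
      also have "\<dots> \<le> real (mm n) / xx n" using \<open>xx n - 1 \<le> real (mm n)\<close> x
        by (intro divide_right_mono) auto
      finally show ?case .
    qed
    show "eventually (\<lambda>n. real (mm n) / xx n \<le> 1) sequentially"
      using ev1
    proof eventually_elim
      case (elim n)
      then show ?case using mle[OF elim] xpos[OF elim] by simp
    qed
    show "(\<lambda>n. 1 - 1 / xx n) \<longlonglongrightarrow> 1" using tendsto_diff[OF tendsto_const ix, of 1] by simp
  qed simp
  have lim2: "(\<lambda>n. (real (mm n) / xx n) ^ (2 * p - 2)) \<longlonglongrightarrow> 1"
    using tendsto_power[OF lim1, of "2 * p - 2"] by simp
  have lim3: "dB \<longlonglongrightarrow> real (k + 1)"
  proof -
    have "(\<lambda>n. real n powr (- (1/2))) \<longlonglongrightarrow> 0"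
      by (rule tendsto_neg_powr[OF _ filterlim_real_sequentially]) simp
    from tendsto_add[OF tendsto_const tendsto_mult[OF tendsto_const this], of "real (k + 1)" 3]
    show ?thesis unfolding dB_def by simp
  qed
  have lim4: "(\<lambda>n. (real (k + 1) / dB n) powr \<gamma>) \<longlonglongrightarrow> 1"
  proof -
    have "(\<lambda>n. real (k + 1) / dB n) \<longlonglongrightarrow> real (k + 1) / real (k + 1)"
      by (rule tendsto_divide[OF tendsto_const lim3]) simp
    then have "(\<lambda>n. real (k + 1) / dB n) \<longlonglongrightarrow> 1" by simp
    from tendsto_powr[OF this tendsto_const[of \<gamma>]] show ?thesis by simp
  qed
  have ulim: "u \<longlonglongrightarrow> 1"
    using tendsto_mult[OF lim2 lim4] unfolding u_def by simp
  have "(\<lambda>n. min 1 (u n) - 1) \<longlonglongrightarrow> min 1 1 - 1"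
    by (intro tendsto_intros ulim)
  then have lim5: "(\<lambda>n. min 1 (u n) - 1) \<longlonglongrightarrow> 0" by simp
  have elim: "e \<longlonglongrightarrow> 0"
  proof -
    have "eventually (\<lambda>n. e n = min 1 (u n) - 1) sequentially"
      using evgood by eventually_elim (simp add: e_def)
    then show ?thesis using lim5 tendsto_cong by metis
  qed
  have ex: "\<exists>(X :: nat set) f. finite X \<and> card X = n \<and> f ` X \<subseteq> X \<and>
              fdeg X (f ^^ k) / fdeg X f powr \<gamma>
                \<ge> (1 + e n) / real (k + 1) powr \<gamma> * real n powr (1 - 1 / 2 ^ (k - 1))"
    if n1: "n \<ge> 1" for n
  proof (cases "k + 1 \<le> mm n")
    case False
    have "(0::nat) \<in> {..<n}" using n1 by simp
    then have ne: "{..<n} \<noteq> {}" by blast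
    have "fdeg {..<n} (id ^^ k) \<ge> 1" using ne by (intro fdeg_ge1) auto
    moreover have "fdeg {..<n} id \<ge> 1" using ne by (intro fdeg_ge1) auto
    ultimately have "fdeg {..<n} (id ^^ k) / fdeg {..<n} id powr \<gamma> \<ge> 0" by simp
    then show ?thesis using False by (intro exI[of _ "{..<n}"] exI[of _ id]) (simp add: e_def)
  next
    case True
    define m where "m = mm n"
    have mk: "m \<ge> k + 1" using True by (simp add: m_def)
    have npos: "real n > 0" using n1 by simp
    have "real m ^ p \<le> xx n ^ p" using mle[OF n1] by (intro power_mono) (auto simp: m_def)
    also have "xx n ^ p = real n"
    proof -
      have "xx n ^ p = xx n powr real p" using xpos[OF n1] by (simp add: powr_realpow)
      also have "\<dots> = real n powr (1 / real p * real p)" by (simp add: xx_def powr_powr)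
      also have "\<dots> = real n" using ppos npos by simp
      finally show ?thesis .
    qed
    finally have "real (m ^ p) \<le> real n" by simp
    then have mn: "m ^ (2^k) \<le> n" by (simp only: of_nat_le_iff p_def)
    have dBpos: "dB n > 0" unfolding dB_def by (simp add: add_pos_nonneg)
    define K where "K = real (k + 1) powr \<gamma>"
    define Dg where "Dg = dB n powr \<gamma>"
    define r where "r = real m / xx n"
    define q where "q = 2 * p - 2"
    have kpos: "K > 0" by (simp add: K_def)
    have Dgpos: "Dg > 0" using dBpos by (simp add: Dg_def)
    have na: "real n powr (1 - 1 / 2 ^ (k - 1)) = xx n ^ q / real n"
      unfolding xx_def p_def q_def by (rule exp_identity[OF k2 n1])
    have un: "u n = r ^ q * (K / Dg)"
    proof -
      have "(real (k + 1) / dB n) powr \<gamma> = K / Dg"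
        using dBpos by (simp add: powr_divide K_def Dg_def)
      then show ?thesis by (simp only: u_def r_def q_def m_def)
    qed
    have "(1 + e n) / K * real n powr (1 - 1 / 2 ^ (k - 1))
        \<le> u n / K * real n powr (1 - 1 / 2 ^ (k - 1))"
      using True kpos by (intro mult_right_mono divide_right_mono) (auto simp: e_def)
    also have "\<dots> = r ^ q * (K / Dg) / K * (xx n ^ q / real n)" by (simp only: un na)
    also have "\<dots> = (r * xx n) ^ q / real n / Dg" using kpos Dgpos
      by (simp add: power_mult_distrib field_simps)
    also have "r * xx n = real m" using xpos[OF n1] by (simp add: r_def)
    also have "q = 2 * 2^k - 2" by (simp add: q_def p_def)
    finally have "(1 + e n) / K * real n powr (1 - 1 / 2 ^ (k - 1))
        \<le> (real m ^ (2 * 2^k - 2) / real n) / dB n powr \<gamma>" by (simp only: Dg_def)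
    then have main_ineq: "(1 + e n) / real (k + 1) powr \<gamma> * real n powr (1 - 1 / 2 ^ (k - 1))
        \<le> (real m ^ (2 * 2^k - 2) / real n) / dB n powr \<gamma>" by (simp only: K_def)
    from construct_real[OF k2 g0 n1 mk mn] show ?thesis
    proof (elim exE conjE)
      fix X :: "nat set" and f :: "nat \<Rightarrow> nat"
      assume Xf: "finite X" "card X = n" "f ` X \<subseteq> X"
        and R0: "(real m ^ (2 * 2^k - 2) / real n) / (real (k + 1) + 3 * real n powr (- (1/2))) powr \<gamma>
                 \<le> fdeg X (f ^^ k) / fdeg X f powr \<gamma>"
      have R: "(real m ^ (2 * 2^k - 2) / real n) / dB n powr \<gamma> \<le> fdeg X (f ^^ k) / fdeg X f powr \<gamma>"
        using R0 by (simp only: dB_def)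
      have "(1 + e n) / real (k + 1) powr \<gamma> * real n powr (1 - 1 / 2 ^ (k - 1)) \<le> fdeg X (f ^^ k) / fdeg X f powr \<gamma>"
        by (rule order_trans[OF main_ineq R])
      then show ?thesis using Xf by blast
    qed
  qed
  show ?thesis using elim ex by blast
qed

theorem mainTheorem1:
  fixes k :: nat and \<gamma> :: real
  assumes "k \<ge> 2" and "\<gamma> \<ge> 0"
  shows "(\<exists>e :: nat \<Rightarrow> real. e \<longlonglongrightarrow> 0 \<and>
           (\<forall>n\<ge>1. \<exists>(X :: nat set) f. finite X \<and> card X = n \<and> f ` X \<subseteq> X \<and>
              fdeg X (f ^^ k) / fdeg X f powr \<gamma>
                \<ge> (1 + e n) / real (k + 1) powr \<gamma> * real n powr (1 - 1 / 2 ^ (k - 1))))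
       \<and> (\<gamma> \<ge> 2 - 1 / 2 ^ (k - 1) \<longrightarrow>
           (\<forall>(X :: 'a set) f. finite X \<and> X \<noteq> {} \<and> f ` X \<subseteq> X \<longrightarrow>
              fdeg X (f ^^ k) / fdeg X f powr \<gamma>
                \<le> real (card X) powr (1 - 1 / 2 ^ (k - 1))))"
  using part1[OF assms] part2[OF assms(1)] by blast

end
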